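(* Let $S$ be an isolated invariant set for $f$ and let $P=(N,L)$ and $P'=(N',L')$ be filtration pairs for $S$. Then there exist an integer $M(P,P')\ge 0$ and maps $r^k_{P'P}:N_L\to N'_{L'}$, defined for all integers $k\ge M(P,P')$, such that (1) $M(P,P')=M(P',P)$ and (2) $r^k_{PP}=f_P^k$; and such that if $P''=(N'',L'')$ is another filtration pair for $S$ then (3) $M(P,P'')\le M(P,P')+M(P',P'')$ and (4) $r^{k_1+k_2}_{P''P}=r^{k_1}_{P''P'}\circ r^{k_2}_{P'P}$ whenever $k_1\ge M(P',P'')$ and $k_2\ge M(P,P')$.
   Context: Let $X$ be a locally compact metric space, $U\subset X$ open and $f:U\to X$ continuous. A solution through $x$ is a map $\sigma:\mathbb Z\to U$ with $\sigma(0)=x$ and $f(\sigma(n))=\sigma(n+1)$ for all $n$; for $N\subset U$, $\operatorname{Inv} N$ is the set of $x\in N$ admitting a solution through $x$ with all values in $N$. A compact $N\subset U$ is an isolating neighborhood if $\operatorname{Inv} N\subset\operatorname{Int} N$; $S$ is an isolated invariant set if $S=\operatorname{Inv} N$ for some isolating neighborhood $N$. The exit set of $N$ is $N^-=\{x\in N:f(x)\notin\operatorname{Int} N\}$. A filtration pair for an isolated invariant set $S$ is a pair of compact sets $L\subset N$ contained in the interior of the domain of $f$, each the closure of its interior, such that (1) $\operatorname{cl}(N\setminus L)$ is an isolating neighborhood with $\operatorname{Inv}\operatorname{cl}(N\setminus L)=S$; (2) $L$ is a neighborhood of $N^-$ in $N$; (3) $f(L)\cap\operatorname{cl}(N\setminus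 L)=\emptyset$. For a filtration pair $P=(N,L)$, $N_L=N/L$ with $L$ collapsed to the base point $[L]$ (if $L=\emptyset$, $N_L$ is $N$ with a disjoint point $[L]$ adjoined), $p:N\to N_L$ is the quotient map, and the pointed space map $f_P:N_L\to N_L$ is $f_P([L])=[L]$, $f_P(p(x))=p(f(x))$ for $x\in N\setminus L$. *)

theory Defs
  imports "HOL-Analysis.Analysis"
begin

text \<open>Setting: X is the ambient type 'a (a metric space, assumed locally compact in the
theorem), U an open subset, f continuous on U.  f is a total HOL function; only its
values on U matter.\<close>

definition Inv :: "'a set \<Rightarrow> ('a \<Rightarrow> 'a) \<Rightarrow> 'a set \<Rightarrow> 'a set" where
  "Inv U f N = {x \<in> N. \<exists>\<sigma>::int \<Rightarrow> 'a. \<sigma> 0 = x \<and>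
       (\<forall>n. \<sigma> n \<in> U \<and> \<sigma> n \<in> N \<and> f (\<sigma> n) = \<sigma> (n + 1))}"

definition isolating_nbhd :: "'a::topological_space set \<Rightarrow> ('a \<Rightarrow> 'a) \<Rightarrow> 'a set \<Rightarrow> bool" where
  "isolating_nbhd U f N \<longleftrightarrow> compact N \<and> N \<subseteq> U \<and> Inv U f N \<subseteq> interior N"

definition isolated_invariant_set :: "'a::topological_space set \<Rightarrow> ('a \<Rightarrow> 'a) \<Rightarrow> 'a set \<Rightarrow> bool" where
  "isolated_invariant_set U f S \<longleftrightarrow> (\<exists>N. isolating_nbhd U f N \<and> S = Inv U f N)"

definition exit_set :: "('a \<Rightarrow> 'a) \<Rightarrow> 'a::topological_space set \<Rightarrow> 'a set" where
  "exit_set f N = {x \<in> N. f x \<notin> interior N}"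

definition filtration_pair ::
  "'a::topological_space set \<Rightarrow> ('a \<Rightarrow> 'a) \<Rightarrow> 'a set \<Rightarrow> 'a set \<times> 'a set \<Rightarrow> bool" where
  "filtration_pair U f S P \<longleftrightarrow> (case P of (N, L) \<Rightarrow>
      compact N \<and> compact L \<and> L \<subseteq> N \<and> N \<subseteq> interior U \<and>
      closure (interior N) = N \<and> closure (interior L) = L \<and>
      isolating_nbhd U f (closure (N - L)) \<and> Inv U f (closure (N - L)) = S \<and>
      (\<exists>V. openin (top_of_set N) V \<and> exit_set f N \<subseteq> V \<and> V \<subseteq> L) \<and>
      f ` L \<inter> closure (N - L) = {})"

text \<open>A point of N \ L is represented by the singleton {x},
the base point [L] by the set L itself (if L = {} this is the extra point {}, which is
disjoint from all singletons, as required).  When L = {} the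
preimage of the base point is empty, so the base point is an isolated point, i.e.
N_L is N with a disjoint point adjoined.\<close>
definition qmap :: "'a set \<Rightarrow> 'a \<Rightarrow> 'a set" where
  "qmap L x = (if x \<in> L then L else {x})"

definition NL_space :: "'a set \<Rightarrow> 'a set \<Rightarrow> 'a set set" where
  "NL_space N L = insert L (qmap L ` N)"

definition NL_top :: "'a::topological_space set \<Rightarrow> 'a set \<Rightarrow> 'a set topology" where
  "NL_top N L = topology (\<lambda>V. V \<subseteq> NL_space N L \<and>
       openin (top_of_set N) {x \<in> N. qmap L x \<in> V})"

definition fP :: "('a \<Rightarrow> 'a) \<Rightarrow> 'a set \<Rightarrow> 'a set \<Rightarrow> 'a set" where
  "fP f L y = (if y = L then L else qmap L (f (the_elem y)))"

end

theory Submission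
  imports Defs "HOL-Analysis.Analysis"
begin

lemma nest_nonempty:
  fixes F :: "nat \<Rightarrow> 'a::t2_space set"
  assumes c: "\<And>n. compact (F n)" and ne: "\<And>n. F n \<noteq> {}" and d: "\<And>n. F (Suc n) \<subseteq> F n"
  shows "(\<Inter>n. F n) \<noteq> {}"
proof -
  have anti: "m \<le> n \<Longrightarrow> F n \<subseteq> F m" for m n
    using d by (rule lift_Suc_antimono_le[of F])
  have cl: "\<And>i. i \<in> UNIV \<Longrightarrow> closed (F i)" using c compact_imp_closed by blast
  have fi: "F 0 \<inter> (\<Inter>i\<in>I'. F i) \<noteq> {}" if fin: "finite I'" "I' \<subseteq> UNIV" for I'
  proof -
    let ?m = "Max (insert 0 I')"
    have m: "i \<le> ?m" if "i \<in> insert 0 I'" for i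
      using fin(1) that by (intro Max_ge) auto
    have "F ?m \<subseteq> F 0 \<inter> (\<Inter>i\<in>I'. F i)"
      using anti m by blast
    then show ?thesis using ne by blast
  qed
  have "F 0 \<inter> (\<Inter>i\<in>UNIV. F i) \<noteq> {}"
    by (rule compact_imp_fip_image[OF c cl fi])
  then show ?thesis by blast
qed

lemma funpow_apply_add: "(g^^i) ((g^^j) x) = (g^^(i+j)) x"
  by (simp add: funpow_add)

locale dynsys =
  fixes U :: "'a::metric_space set" and f :: "'a \<Rightarrow> 'a"
  assumes openU: "open U" and contf: "continuous_on U f"
begin

lemma all_le_Suc_split: "(\<forall>i\<le>Suc n. P i) \<longleftrightarrow> P 0 \<and> (\<forall>i\<le>n. P (Suc i))"
proof
  assume "P 0 \<and> (\<forall>i\<le>n. P (Suc i))"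
  then show "\<forall>i\<le>Suc n. P i"
    by (intro allI impI, case_tac i) auto
qed auto

lemma funpow_Suc_apply: "(f^^Suc i) x = (f^^i) (f x)"
  by (simp add: funpow_Suc_right del: funpow.simps)

lemma closed_orbit_set:
  assumes "\<And>i. i \<le> n \<Longrightarrow> closed (C i) \<and> C i \<subseteq> U"
  shows "closed {x. \<forall>i\<le>n. (f^^i) x \<in> C i}"
  using assms
proof (induction n arbitrary: C)
  case 0
  then show ?case by simp
next
  case (Suc n)
  have IH: "closed {y. \<forall>i\<le>n. (f^^i) y \<in> C (Suc i)}"
    using Suc.prems by (intro Suc.IH) auto
  have eq: "{x. \<forall>i\<le>Suc n. (f^^i) x \<in> C i} = C 0 \<inter> f -` {y. \<forall>i\<le>n. (f^^i) y \<in> C (Suc i)}"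
    by (auto simp: all_le_Suc_split funpow_Suc_apply simp del: funpow.simps)
  have C0: "closed (C 0)" "C 0 \<subseteq> U" using Suc.prems by auto
  have "continuous_on (C 0) f" using contf C0(2) by (rule continuous_on_subset)
  then show ?case unfolding eq by (rule continuous_closed_preimage[OF _ C0(1) IH])
qed

lemma open_orbit_set:
  assumes "\<And>i. i \<le> n \<Longrightarrow> open (G i)"
  shows "open {x. \<forall>i\<le>n. (f^^i) x \<in> U \<inter> G i}"
  using assms
proof (induction n arbitrary: G)
  case 0
  have "{x. \<forall>i\<le>0. (f^^i) x \<in> U \<inter> G i} = U \<inter> G 0" by auto
  then show ?case using openU 0 by (simp add: open_Int)
next
  case (Suc n)
  have IH: "open {y. \<forall>i\<le>n. (f^^i) y \<in> U \<inter> G (Suc i)}"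
    using Suc.prems by (intro Suc.IH) auto
  have eq: "{x. \<forall>i\<le>Suc n. (f^^i) x \<in> U \<inter> G i} = (U \<inter> G 0) \<inter> f -` {y. \<forall>i\<le>n. (f^^i) y \<in> U \<inter> G (Suc i)}"
    by (auto simp: all_le_Suc_split funpow_Suc_apply simp del: funpow.simps)
  have "continuous_on (U \<inter> G 0) f" using contf by (rule continuous_on_subset) blast
  moreover have "open (U \<inter> G 0)" using openU Suc.prems by auto
  ultimately show ?case unfolding eq by (rule continuous_open_preimage[OF _ _ IH])
qed

lemma continuous_funpow:
  assumes "\<And>x i. x \<in> H \<Longrightarrow> i < m \<Longrightarrow> (f^^i) x \<in> U"
  shows "continuous_on H (f^^m)"
  using assms
proof (induction m)
  case 0
  then show ?case by (simp add: continuous_on_id)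
next
  case (Suc m)
  have "continuous_on ((f^^m) ` H) f"
    using contf by (rule continuous_on_subset) (use Suc.prems in auto)
  then have "continuous_on H (f \<circ> (f^^m))"
    using Suc by (intro continuous_on_compose) auto
  then show ?case by simp
qed

end

definition DD :: "'a set \<times> 'a set \<Rightarrow> 'a set" where "DD P = fst P - snd P"
definition AA :: "'a::topological_space set \<times> 'a set \<Rightarrow> 'a set" where "AA P = closure (fst P - snd P)"
definition WW :: "'a::topological_space set \<times> 'a set \<Rightarrow> 'a set" where "WW P = interior (fst P) - snd P"

context dynsys
begin

lemma fp_facts:
  assumes fp: "filtration_pair U f S P"
  shows "compact (fst P)" "compact (snd P)" "snd P \<subseteq> fst P" "fst P \<subseteq> U"
    "AA P \<subseteq> fst P" "compact (AA P)" "AA P \<subseteq> U" "Inv U f (AA P) = S"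
    "S \<subseteq> interior (AA P)" "\<And>x. x \<in> DD P \<Longrightarrow> f x \<in> interior (fst P)"
    "\<And>x. x \<in> snd P \<Longrightarrow> f x \<notin> AA P" "S \<subseteq> WW P" "DD P \<subseteq> AA P" "WW P \<subseteq> DD P"
    "closed (fst P)" "closed (snd P)" "closed (AA P)" "open (WW P)"
proof -
  obtain N L where P: "P = (N, L)" by (cases P)
  have cN: "compact N" and cL: "compact L" and LN: "L \<subseteq> N" and NU: "N \<subseteq> interior U"
    and iso: "isolating_nbhd U f (closure (N - L))" and S: "Inv U f (closure (N - L)) = S"
    and ex: "\<exists>V. openin (top_of_set N) V \<and> exit_set f N \<subseteq> V \<and> V \<subseteq> L"
    and fL: "f ` L \<inter> closure (N - L) = {}"
    using fp unfolding filtration_pair_def P by auto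
  show "compact (fst P)" "compact (snd P)" "snd P \<subseteq> fst P" using cN cL LN P by auto
  show NU': "fst P \<subseteq> U" using NU interior_subset P by auto
  show clN: "closed (fst P)" "closed (snd P)" using cN cL P compact_imp_closed by auto
  show AN: "AA P \<subseteq> fst P" unfolding AA_def using clN by (simp add: closure_minimal)
  show "compact (AA P)" "AA P \<subseteq> U" "Inv U f (AA P) = S" "S \<subseteq> interior (AA P)"
    using iso S unfolding isolating_nbhd_def AA_def P by auto
  then show "closed (AA P)" using compact_imp_closed by blast
  have exL: "exit_set f N \<subseteq> L" using ex by blast
  show "f x \<in> interior (fst P)" if "x \<in> DD P" for x
    using that exL unfolding DD_def exit_set_def P by auto
  show fLA: "f x \<notin> AA P" if "x \<in> snd P" for x
    using that fL unfolding AA_def P by auto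
  show "DD P \<subseteq> AA P" unfolding DD_def AA_def by (rule closure_subset)
  show "WW P \<subseteq> DD P" unfolding DD_def WW_def using interior_subset by blast
  show "open (WW P)" unfolding WW_def using clN by (simp add: open_Diff)
  show "S \<subseteq> WW P"
  proof
    fix s assume s: "s \<in> S"
    have "s \<in> interior (AA P)" using s \<open>S \<subseteq> interior (AA P)\<close> by blast
    then have "s \<in> interior (fst P)" using interior_mono[OF AN] by blast
    moreover have "s \<notin> snd P"
    proof
      assume sL: "s \<in> snd P"
      have "s \<in> Inv U f (AA P)" using s \<open>Inv U f (AA P) = S\<close> by simp
      then obtain \<sigma> :: "int \<Rightarrow> 'a" where s0: "\<sigma> 0 = s" and sg: "\<forall>n. \<sigma> n \<in> U \<and> \<sigma> n \<in> AA P \<and> f (\<sigma> n) = \<sigma> (n + 1)"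
        unfolding Inv_def by blast
      have "f (\<sigma> 0) = \<sigma> (0 + 1)" "\<sigma> (0+1) \<in> AA P" using sg by blast+
      then have "f s \<in> AA P" using s0 by simp
      with fLA[OF sL] show False by blast
    qed
    ultimately show "s \<in> WW P" unfolding WW_def by blast
  qed
qed

lemma lemK:
  assumes cA: "compact A" and AU: "A \<subseteq> U" and IW: "Inv U f A \<subseteq> W" and oW: "open W"
  shows "\<exists>m. \<forall>x. (\<forall>i\<le>2*m. (f^^i) x \<in> A) \<longrightarrow> (f^^m) x \<in> W"
proof (rule ccontr)
  assume nex: "\<not> ?thesis"
  define H where "H n = {x. \<forall>i\<le>n. (f^^i) x \<in> A}" for n
  define E where "E m = (f^^m) ` H (2*m)" for m
  have clA: "closed A" using cA compact_imp_closed by blast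
  have HA: "H n \<subseteq> A" for n unfolding H_def by (force)
  have cH: "compact (H n)" for n
  proof -
    have "closed (H n)" unfolding H_def using clA AU by (intro closed_orbit_set) auto
    then show ?thesis using HA cA by (metis compact_Int_closed inf.absorb_iff2)
  qed
  have cE: "compact (E m)" for m
  proof -
    have "continuous_on (H (2*m)) (f^^m)"
      by (rule continuous_funpow) (use AU in \<open>auto simp: H_def\<close>)
    then show ?thesis unfolding E_def using cH by (rule compact_continuous_image)
  qed
  have EA: "E m \<subseteq> A" for m unfolding E_def H_def by force
  have Emem: "(f^^m) x \<in> E m" if "\<forall>i\<le>2*m. (f^^i) x \<in> A" for m x
    unfolding E_def H_def using that by blast
  have Edec: "E (Suc m) \<subseteq> E m" for m
  proof
    fix z assume "z \<in> E (Suc m)"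
    then obtain x where x: "\<forall>i\<le>2*Suc m. (f^^i) x \<in> A" and z: "z = (f^^Suc m) x"
      unfolding E_def H_def by blast
    have "\<forall>i\<le>2*m. (f^^i) (f x) \<in> A" using x by (simp add: funpow_Suc_apply[symmetric] del: funpow.simps)
    then have "(f^^m) (f x) \<in> E m" by (rule Emem)
    then show "z \<in> E m" using z by (simp add: funpow_Suc_apply del: funpow.simps)
  qed
  have ne: "E m - W \<noteq> {}" for m
  proof
    assume e: "E m - W = {}"
    have "\<forall>x. (\<forall>i\<le>2*m. (f^^i) x \<in> A) \<longrightarrow> (f^^m) x \<in> W" using Emem e by blast
    with nex show False by blast
  qed
  have "(\<Inter>m. E m - W) \<noteq> {}"
    by (rule nest_nonempty) (use cE oW ne Edec compact_diff in blast)+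
  then obtain z where zE: "\<And>m. z \<in> E m" and zW: "z \<notin> W" by blast
  define T where "T = (\<Inter>m. E m)"
  have TA: "T \<subseteq> A" unfolding T_def using EA by blast
  have Tf: "f w \<in> T" if "w \<in> T" for w
  proof -
    have "f w \<in> E m" for m
    proof -
      have "w \<in> E (Suc m)" using that T_def by blast
      then obtain x where x: "\<forall>i\<le>2*Suc m. (f^^i) x \<in> A" and z: "w = (f^^Suc m) x"
        unfolding E_def H_def by blast
      have "\<forall>i\<le>2*m. (f^^i) ((f^^2) x) \<in> A"
      proof (intro allI impI)
        fix i assume "i \<le> 2*m"
        then have "i+2 \<le> 2*Suc m" by simp
        then have "(f^^(i+2)) x \<in> A" using x by blast
        then show "(f^^i) ((f^^2) x) \<in> A" by (simp only: funpow_apply_add)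
      qed
      then have "(f^^m) ((f^^2) x) \<in> E m" by (rule Emem)
      moreover have "(f^^m) ((f^^2) x) = (f^^(m+2)) x" by (rule funpow_apply_add)
      moreover have "(f^^(m+2)) x = f w" unfolding z by simp
      ultimately show ?thesis by simp
    qed
    then show ?thesis unfolding T_def by blast
  qed
  have Tp: "\<exists>y\<in>T. f y = w" if "w \<in> T" for w
  proof -
    define Y where "Y m = E m \<inter> f -` {w}" for m
    have cY: "compact (Y m)" for m
    proof -
      have "continuous_on (E m) f" using contf by (rule continuous_on_subset) (use EA AU in blast)
      then have "closed (E m \<inter> f -` {w})"
        using cE compact_imp_closed by (intro continuous_closed_preimage) auto
      then have "compact (E m \<inter> (E m \<inter> f -` {w}))" using cE by (intro compact_Int_closed)
      then show ?thesis unfolding Y_def by (simp add: Int_absorb Int_assoc[symmetric])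
    qed
    have neY: "Y m \<noteq> {}" for m
    proof -
      have "w \<in> E (Suc m)" using that T_def by blast
      then obtain x where x: "\<forall>i\<le>2*Suc m. (f^^i) x \<in> A" and z: "w = (f^^Suc m) x"
        unfolding E_def H_def by blast
      have "(f^^m) x \<in> E m" using x by (intro Emem) auto
      moreover have "f ((f^^m) x) = w" using z by simp
      ultimately show ?thesis unfolding Y_def by blast
    qed
    have "(\<Inter>m. Y m) \<noteq> {}"
      by (rule nest_nonempty) (use cY neY Edec in \<open>auto simp: Y_def\<close>)
    then obtain y where "\<And>m. y \<in> Y m" by blast
    then show ?thesis unfolding Y_def T_def by blast
  qed
  have "\<exists>pr. \<forall>w\<in>T. pr w \<in> T \<and> f (pr w) = w"
    by (rule bchoice) (use Tp in blast)
  then obtain pr where pr: "\<And>w. w \<in> T \<Longrightarrow> pr w \<in> T \<and> f (pr w) = w"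
    by blast
  have zT: "z \<in> T" unfolding T_def using zE by blast
  have fT: "(f^^n) z \<in> T" for n by (induction n) (use zT Tf in auto)
  have pT: "(pr^^n) z \<in> T" for n by (induction n) (use zT pr in auto)
  define \<sigma> where "\<sigma> n = (if 0 \<le> n then (f^^nat n) z else (pr^^nat (-n)) z)" for n :: int
  have sT: "\<sigma> n \<in> T" for n unfolding \<sigma>_def using fT pT by auto
  have sf: "f (\<sigma> n) = \<sigma> (n+1)" for n
  proof (cases "0 \<le> n")
    case True
    then have "nat (n+1) = Suc (nat n)" by auto
    then show ?thesis using True unfolding \<sigma>_def by auto
  next
    case False
    show ?thesis
    proof (cases "n = -1")
      case True
      then show ?thesis unfolding \<sigma>_def using pr[OF zT] by simp
    next
      case False
      with \<open>\<not> 0 \<le> n\<close> have "nat (-n) = Suc (nat (-(n+1)))" "\<not> 0 \<le> n + 1" by auto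
      then show ?thesis unfolding \<sigma>_def using \<open>\<not> 0 \<le> n\<close> pr[OF pT] by simp
    qed
  qed
  have all: "\<forall>n. \<sigma> n \<in> U \<and> \<sigma> n \<in> A \<and> f (\<sigma> n) = \<sigma> (n+1)"
    using sT sf TA AU by blast
  have s0: "\<sigma> 0 = z" by (simp add: \<sigma>_def)
  have "z \<in> A" using zT TA by blast
  then have "z \<in> Inv U f A"
    unfolding Inv_def using all s0 by blast
  with IW zW show False by blast
qed

end

lemma comp_arith:
  fixes p q r :: "nat \<Rightarrow> bool" and \<alpha> \<beta> \<gamma> k1 k2 :: nat
  assumes tri: "\<gamma> \<le> \<alpha> + \<beta>" and k1: "5*\<beta> \<le> k1" and k2: "5*\<alpha> \<le> k2"
    and LPQ: "\<And>s e t. \<forall>i. s \<le> i \<and> i \<le> e \<longrightarrow> p i \<Longrightarrow> s + \<alpha> \<le> t \<Longrightarrow> t + \<alpha> \<le> e \<Longrightarrow> q t"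
    and LQP: "\<And>s e t. \<forall>i. s \<le> i \<and> i \<le> e \<longrightarrow> q i \<Longrightarrow> s + \<alpha> \<le> t \<Longrightarrow> t + \<alpha> \<le> e \<Longrightarrow> p t"
    and LQR: "\<And>s e t. \<forall>i. s \<le> i \<and> i \<le> e \<longrightarrow> q i \<Longrightarrow> s + \<beta> \<le> t \<Longrightarrow> t + \<beta> \<le> e \<Longrightarrow> r t"
    and LRQ: "\<And>s e t. \<forall>i. s \<le> i \<and> i \<le> e \<longrightarrow> r i \<Longrightarrow> s + \<beta> \<le> t \<Longrightarrow> t + \<beta> \<le> e \<Longrightarrow> q t"
    and LPR: "\<And>s e t. \<forall>i. s \<le> i \<and> i \<le> e \<longrightarrow> p i \<Longrightarrow> s + \<gamma> \<le> t \<Longrightarrow> t + \<gamma> \<le> e \<Longrightarrow> r t"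
    and LRP: "\<And>s e t. \<forall>i. s \<le> i \<and> i \<le> e \<longrightarrow> r i \<Longrightarrow> s + \<gamma> \<le> t \<Longrightarrow> t + \<gamma> \<le> e \<Longrightarrow> p t"
  shows "((\<forall>i. i + \<gamma> \<le> k1 + k2 \<longrightarrow> p i) \<and> (\<forall>i. \<gamma> \<le> i \<and> i \<le> k1 + k2 \<longrightarrow> r i)) \<longleftrightarrow>
    ((\<forall>i. i + \<alpha> \<le> k2 \<longrightarrow> p i) \<and> (\<forall>i. \<alpha> \<le> i \<and> i \<le> k2 \<longrightarrow> q i) \<and>
     (\<forall>i. i + \<beta> \<le> k1 \<longrightarrow> q (i + k2)) \<and> (\<forall>i. \<beta> \<le> i \<and> i \<le> k1 \<longrightarrow> r (i + k2)))"
    (is "?L \<longleftrightarrow> ?R")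
proof
  assume L: ?L
  have P1: "\<And>i. i + \<gamma> \<le> k1 + k2 \<Longrightarrow> p i" and R1: "\<And>i. \<gamma> \<le> i \<Longrightarrow> i \<le> k1 + k2 \<Longrightarrow> r i"
    using L by auto
  have Q: "q t" if "\<alpha> \<le> t" "t + \<beta> \<le> k1 + k2" for t
  proof (cases "t + \<alpha> + \<gamma> \<le> k1 + k2")
    case True
    have seg: "\<forall>i. 0 \<le> i \<and> i \<le> k1 + k2 - \<gamma> \<longrightarrow> p i" using P1 True by auto
    show ?thesis by (rule LPQ[OF seg]) (use that True in auto)
  next
    case False
    have seg: "\<forall>i. \<gamma> \<le> i \<and> i \<le> k1 + k2 \<longrightarrow> r i" using R1 by auto
    show ?thesis by (rule LRQ[OF seg]) (use that False tri k1 k2 in auto)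
  qed
  show ?R
  proof (intro conjI allI impI)
    fix i show "i + \<alpha> \<le> k2 \<Longrightarrow> p i" using P1 tri k1 by auto
    show "\<alpha> \<le> i \<and> i \<le> k2 \<Longrightarrow> q i" using Q k1 by auto
    show "i + \<beta> \<le> k1 \<Longrightarrow> q (i + k2)" using Q k2 by auto
    show "\<beta> \<le> i \<and> i \<le> k1 \<Longrightarrow> r (i + k2)" using R1 tri k2 by auto
  qed
next
  assume R: ?R
  have P0: "\<And>t. t + \<alpha> \<le> k2 \<Longrightarrow> p t" using R by auto
  have R0: "\<And>t. k2 + \<beta> \<le> t \<Longrightarrow> t \<le> k1 + k2 \<Longrightarrow> r t"
  proof -
    fix t assume "k2 + \<beta> \<le> t" "t \<le> k1 + k2"
    then have "\<beta> \<le> t - k2 \<and> t - k2 \<le> k1" by auto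
    then have "r (t - k2 + k2)" using R by blast
    then show "r t" using \<open>k2 + \<beta> \<le> t\<close> by simp
  qed
  have Q: "q t" if "\<alpha> \<le> t" "t + \<beta> \<le> k1 + k2" for t
  proof (cases "t \<le> k2")
    case True then show ?thesis using R that by blast
  next
    case False
    then have "t - k2 + \<beta> \<le> k1" using that by auto
    then have "q (t - k2 + k2)" using R by blast
    then show ?thesis using False by simp
  qed
  have segQ: "\<forall>i. \<alpha> \<le> i \<and> i \<le> k1 + k2 - \<beta> \<longrightarrow> q i" using Q k1 by auto
  show ?L
  proof (cases "\<alpha> \<le> \<beta>")
    case ab: True
    have P2: "p t" if "t + \<beta> + \<alpha> \<le> k1 + k2" for t
    proof (cases "t + \<alpha> \<le> k2")
      case True then show ?thesis using P0 by blast
    next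
      case False
      show ?thesis by (rule LQP[OF segQ]) (use that False k2 in auto)
    qed
    have segP: "\<forall>i. 0 \<le> i \<and> i \<le> k1 + k2 - \<beta> - \<alpha> \<longrightarrow> p i" using P2 k1 k2 by auto
    have segR: "\<forall>i. k2 + \<beta> \<le> i \<and> i \<le> k1 + k2 \<longrightarrow> r i" using R0 by auto
    show ?L
    proof (intro conjI allI impI)
      fix i
      show "p i" if "i + \<gamma> \<le> k1 + k2"
      proof (cases "i + \<beta> + \<alpha> \<le> k1 + k2")
        case True then show ?thesis using P2 by blast
      next
        case False
        show ?thesis by (rule LRP[OF segR]) (use that False k1 k2 tri ab in auto)
      qed
      show "r i" if "\<gamma> \<le> i \<and> i \<le> k1 + k2"
      proof (cases "k2 + \<beta> \<le> i")
        case True then show ?thesis using R0 that by blast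
      next
        case False
        show ?thesis by (rule LPR[OF segP]) (use that False k1 k2 tri ab in auto)
      qed
    qed
  next
    case ba: False
    have R2: "r t" if "\<alpha> + \<beta> \<le> t" "t \<le> k1 + k2" for t
    proof (cases "k2 + \<beta> \<le> t")
      case True then show ?thesis using R0 that by blast
    next
      case False
      show ?thesis by (rule LQR[OF segQ]) (use that False k1 in auto)
    qed
    have segR: "\<forall>i. \<alpha> + \<beta> \<le> i \<and> i \<le> k1 + k2 \<longrightarrow> r i" using R2 by auto
    have segP: "\<forall>i. 0 \<le> i \<and> i \<le> k2 - \<alpha> \<longrightarrow> p i" using P0 k2 by auto
    show ?L
    proof (intro conjI allI impI)
      fix i
      show "p i" if "i + \<gamma> \<le> k1 + k2"
      proof (cases "i + \<alpha> \<le> k2")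
        case True then show ?thesis using P0 by blast
      next
        case False
        show ?thesis by (rule LRP[OF segR]) (use that False k1 k2 tri ba in auto)
      qed
      show "r i" if "\<gamma> \<le> i \<and> i \<le> k1 + k2"
      proof (cases "\<alpha> + \<beta> \<le> i")
        case True then show ?thesis using R2 that by blast
      next
        case False
        show ?thesis by (rule LPR[OF segP]) (use that False k1 k2 tri ba in auto)
      qed
    qed
  qed
qed

context dynsys
begin

definition RR where "RR P Q m \<longleftrightarrow> (\<forall>x. (\<forall>i\<le>2*m. (f^^i) x \<in> AA P) \<longrightarrow> (f^^m) x \<in> WW Q)"
definition mu0 where "mu0 P Q = (LEAST m. RR P Q m)"
definition mu where "mu P Q = max (mu0 P Q) (mu0 Q P)"

lemma RR_ex:
  assumes "filtration_pair U f S P" "filtration_pair U f S Q"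
  shows "\<exists>m. RR P Q m"
proof -
  have "\<exists>m. \<forall>x. (\<forall>i\<le>2*m. (f^^i) x \<in> AA P) \<longrightarrow> (f^^m) x \<in> WW Q"
    using fp_facts[OF assms(1)] fp_facts[OF assms(2)] by (intro lemK) auto
  then show ?thesis unfolding RR_def .
qed

lemma RR_Suc:
  assumes "RR P Q m" shows "RR P Q (Suc m)"
  unfolding RR_def
proof (intro allI impI)
  fix x assume x: "\<forall>i\<le>2 * Suc m. (f ^^ i) x \<in> AA P"
  have "\<forall>i\<le>2*m. (f^^i) (f x) \<in> AA P"
  proof (intro allI impI)
    fix i assume "i \<le> 2*m"
    then have "Suc i \<le> 2 * Suc m" by simp
    then have "(f^^Suc i) x \<in> AA P" using x by blast
    then show "(f^^i) (f x) \<in> AA P" by (simp only: funpow_Suc_apply)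
  qed
  then have "(f^^m) (f x) \<in> WW Q" using assms unfolding RR_def by blast
  then show "(f^^Suc m) x \<in> WW Q" by (simp only: funpow_Suc_apply)
qed

lemma RR_mono:
  assumes "RR P Q m" "m \<le> m'" shows "RR P Q m'"
proof -
  have "RR P Q (m + d)" for d by (induction d) (use assms RR_Suc in auto)
  then show ?thesis using assms(2) by (metis le_add_diff_inverse)
qed

lemma RR_trans:
  assumes fQ: "filtration_pair U f S Q" and 1: "RR P Q a" and 2: "RR Q R b"
  shows "RR P R (a + b)"
  unfolding RR_def
proof (intro allI impI)
  fix x assume x: "\<forall>i\<le>2 * (a + b). (f ^^ i) x \<in> AA P"
  have "\<forall>j\<le>2*b. (f^^j) ((f^^a) x) \<in> AA Q"
  proof (intro allI impI)
    fix j assume j: "j \<le> 2*b"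
    have "\<forall>i\<le>2*a. (f^^i) ((f^^j) x) \<in> AA P"
    proof (intro allI impI)
      fix i assume "i \<le> 2*a"
      then have "i + j \<le> 2*(a+b)" using j by simp
      then show "(f^^i) ((f^^j) x) \<in> AA P" using x by (simp only: funpow_apply_add)
    qed
    then have "(f^^a) ((f^^j) x) \<in> WW Q" using 1 unfolding RR_def by blast
    then have "(f^^a) ((f^^j) x) \<in> AA Q" using fp_facts(13,14)[OF fQ] by blast
    then show "(f^^j) ((f^^a) x) \<in> AA Q" by (simp only: funpow_apply_add add.commute)
  qed
  then have "(f^^b) ((f^^a) x) \<in> WW R" using 2 unfolding RR_def by blast
  then show "(f^^(a+b)) x \<in> WW R" by (simp only: funpow_apply_add add.commute)
qed

lemma mu0_RR:
  assumes "filtration_pair U f S P" "filtration_pair U f S Q"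
  shows "RR P Q (mu0 P Q)"
  unfolding mu0_def using RR_ex[OF assms] by (rule LeastI_ex)

lemma mu0_tri:
  assumes "filtration_pair U f S P" "filtration_pair U f S Q" "filtration_pair U f S R"
  shows "mu0 P R \<le> mu0 P Q + mu0 Q R"
proof -
  have "RR P R (mu0 P Q + mu0 Q R)"
    using RR_trans[OF assms(2) mu0_RR[OF assms(1,2)] mu0_RR[OF assms(2,3)]] .
  then show ?thesis unfolding mu0_def[of P R] by (rule Least_le)
qed

lemma mu_sym: "mu P Q = mu Q P" unfolding mu_def by simp

lemma mu_tri:
  assumes "filtration_pair U f S P" "filtration_pair U f S Q" "filtration_pair U f S R"
  shows "mu P R \<le> mu P Q + mu Q R"
  using mu0_tri[OF assms] mu0_tri[OF assms(3,2,1)] unfolding mu_def by auto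

lemma RR_mu:
  assumes "filtration_pair U f S P" "filtration_pair U f S Q" "mu P Q \<le> a"
  shows "RR P Q a"
  using mu0_RR[OF assms(1,2)] assms(3) unfolding mu_def by (auto intro: RR_mono)

lemma loc:
  assumes "RR P Q a" "\<forall>i. s \<le> i \<and> i \<le> e \<longrightarrow> (f^^i) x \<in> AA P" "s + a \<le> t" "t + a \<le> e"
  shows "(f^^t) x \<in> WW Q"
proof -
  have "\<forall>j\<le>2*a. (f^^j) ((f^^(t-a)) x) \<in> AA P"
  proof (intro allI impI)
    fix j assume "j \<le> 2*a"
    then have "s \<le> j + (t - a) \<and> j + (t - a) \<le> e" using assms(3,4) by auto
    then show "(f^^j) ((f^^(t-a)) x) \<in> AA P" using assms(2) by (simp only: funpow_apply_add)
  qed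
  then have "(f^^a) ((f^^(t-a)) x) \<in> WW Q" using assms(1) unfolding RR_def by blast
  moreover have "a + (t - a) = t" using assms(3) by simp
  ultimately show ?thesis by (simp only: funpow_apply_add)
qed

end

lemma istop_NL: "istopology (\<lambda>V. V \<subseteq> NL_space N L \<and> openin (top_of_set N) {x \<in> N. qmap L x \<in> V})"
proof -
  have A: "S \<inter> T \<subseteq> NL_space N L \<and> openin (top_of_set N) {x \<in> N. qmap L x \<in> S \<inter> T}"
    if a: "S \<subseteq> NL_space N L \<and> openin (top_of_set N) {x \<in> N. qmap L x \<in> S}"
    "T \<subseteq> NL_space N L \<and> openin (top_of_set N) {x \<in> N. qmap L x \<in> T}" for S T
  proof -
    have "{x \<in> N. qmap L x \<in> S \<inter> T} = {x \<in> N. qmap L x \<in> S} \<inter> {x \<in> N. qmap L x \<in> T}" by auto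
    then show ?thesis using a by (auto intro: openin_Int)
  qed
  have B: "\<Union>K \<subseteq> NL_space N L \<and> openin (top_of_set N) {x \<in> N. qmap L x \<in> \<Union>K}"
    if a: "\<forall>V\<in>K. V \<subseteq> NL_space N L \<and> openin (top_of_set N) {x \<in> N. qmap L x \<in> V}" for K
  proof -
    have "{x \<in> N. qmap L x \<in> \<Union>K} = \<Union>((\<lambda>V. {x \<in> N. qmap L x \<in> V}) ` K)" by auto
    moreover have "openin (top_of_set N) (\<Union>((\<lambda>V. {x \<in> N. qmap L x \<in> V}) ` K))"
      using a by (intro openin_Union) auto
    ultimately show ?thesis using a by auto
  qed
  show ?thesis unfolding istopology_def
    by (intro conjI allI impI; (simp only: )?) (use A B in \<open>blast+\<close>)
qed

lemma openin_NL: "openin (NL_top N L) V \<longleftrightarrow> V \<subseteq> NL_space N L \<and> openin (top_of_set N) {x \<in> N. qmap L x \<in> V}"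
  unfolding NL_top_def topology_inverse'[OF istop_NL] by (rule refl)

lemma qmap_in: "x \<in> N \<Longrightarrow> qmap L x \<in> NL_space N L"
  unfolding NL_space_def by auto

lemma qmap_notin: "x \<notin> L \<Longrightarrow> qmap L x = {x}"
  unfolding qmap_def by auto

lemma qmap_in_L: "x \<in> L \<Longrightarrow> qmap L x = L"
  unfolding qmap_def by auto

lemma single_neq: "x \<notin> L \<Longrightarrow> {x} \<noteq> L" by auto

lemma topspace_NL: "topspace (NL_top N L) = NL_space N L"
proof -
  have "openin (NL_top N L) (NL_space N L)"
    unfolding openin_NL using qmap_in[of _ N L]
    by (simp add: Collect_conj_eq[symmetric]) (metis (no_types, lifting) mem_Collect_eq subsetI subset_antisym openin_subtopology_self topspace_euclidean_subtopology Collect_mem_eq)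
  then show ?thesis unfolding topspace_def using openin_NL by auto
qed

lemma cont_NL:
  assumes rng: "\<And>y. y \<in> NL_space N L \<Longrightarrow> g y \<in> NL_space N' L'"
    and op: "\<And>V. V \<subseteq> NL_space N' L' \<Longrightarrow> openin (top_of_set N') {z \<in> N'. qmap L' z \<in> V}
              \<Longrightarrow> openin (top_of_set N) {x \<in> N. g (qmap L x) \<in> V}"
  shows "continuous_map (NL_top N L) (NL_top N' L') g"
  unfolding continuous_map_def topspace_NL
proof (intro conjI allI impI)
  show "g \<in> NL_space N L \<rightarrow> NL_space N' L'" using rng by auto
  fix V assume "openin (NL_top N' L') V"
  then have V: "V \<subseteq> NL_space N' L'" "openin (top_of_set N') {z \<in> N'. qmap L' z \<in> V}"
    unfolding openin_NL by auto
  have "{x \<in> N. qmap L x \<in> {y \<in> NL_space N L. g y \<in> V}} = {x \<in> N. g (qmap L x) \<in> V}"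
    using qmap_in[of _ N L] by auto
  then show "openin (NL_top N L) {x \<in> NL_space N L. g x \<in> V}"
    unfolding openin_NL using op[OF V] by auto
qed

context dynsys
begin

lemma fP_L: "(fP f L ^^ k) L = L"
  by (induction k) (auto simp: fP_def)

lemma fP_pow:
  assumes fp: "filtration_pair U f S P" and x: "x \<in> DD P"
  shows "(fP f (snd P) ^^ k) {x} = (if \<forall>i\<le>k. (f^^i) x \<in> DD P then {(f^^k) x} else snd P)"
proof (induction k)
  case 0
  then show ?case using x by simp
next
  case (Suc k)
  show ?case
  proof (cases "\<forall>i\<le>k. (f^^i) x \<in> DD P")
    case True
    then have fk: "(f^^k) x \<in> DD P" by blast
    then have ne: "{(f^^k) x} \<noteq> snd P" unfolding DD_def by auto
    have IH': "(fP f (snd P) ^^ k) {x} = {(f^^k) x}" using Suc True by simp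
    have "(fP f (snd P) ^^ Suc k) {x} = fP f (snd P) {(f^^k) x}" using IH' by simp
    also have "\<dots> = qmap (snd P) (f ((f^^k) x))" using ne unfolding fP_def by simp
    finally have st: "(fP f (snd P) ^^ Suc k) {x} = qmap (snd P) (f ((f^^k) x))" .
    have "f ((f^^k) x) \<in> fst P" using fp_facts(10)[OF fp fk] interior_subset by blast
    then have eq: "(\<forall>i\<le>Suc k. (f^^i) x \<in> DD P) \<longleftrightarrow> f ((f^^k) x) \<notin> snd P"
      using True unfolding DD_def by (auto simp: le_Suc_eq)
    show ?thesis unfolding st using eq by (simp add: qmap_def)
  next
    case False
    then have ns: "\<not> (\<forall>i\<le>Suc k. (f^^i) x \<in> DD P)" using le_SucI by blast
    have "(fP f (snd P) ^^ k) {x} = snd P" using Suc False by simp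
    then have "(fP f (snd P) ^^ Suc k) {x} = snd P" by (simp add: fP_def)
    then show ?thesis using ns by (simp only: if_False)
  qed
qed

definition Phi where "Phi P Q a k x \<longleftrightarrow> (\<forall>i. i + a \<le> k \<longrightarrow> (f^^i) x \<in> DD P) \<and> (\<forall>i. a \<le> i \<and> i \<le> k \<longrightarrow> (f^^i) x \<in> DD Q)"
definition rmap where "rmap Q P k y = (if y \<noteq> snd P \<and> Phi P Q (mu P Q) k (the_elem y) then {(f^^k) (the_elem y)} else snd Q)"

lemma rmap_L: "rmap Q P k (snd P) = snd Q" unfolding rmap_def by simp

lemma rmap_single: "x \<in> DD P \<Longrightarrow> rmap Q P k {x} = (if Phi P Q (mu P Q) k x then {(f^^k) x} else snd Q)"
  unfolding rmap_def DD_def by auto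

end

context dynsys
begin

lemma funpow_pred: "0 < i \<Longrightarrow> (f^^i) x = f ((f^^(i-1)) x)"
  by (cases i) auto

lemma rmap_cont:
  assumes fP: "filtration_pair U f S P" and fQ: "filtration_pair U f S Q" and k: "5 * mu P Q \<le> k"
  shows "continuous_map (NL_top (fst P) (snd P)) (NL_top (fst Q) (snd Q)) (rmap Q P k)"
proof -
  define \<alpha> where "\<alpha> = mu P Q"
  note FP = fp_facts[OF fP] and FQ = fp_facts[OF fQ]
  have RPQ: "RR P Q \<alpha>" using RR_mu[OF fP fQ] \<alpha>_def by simp
  have RQP: "RR Q P \<alpha>" using RR_mu[OF fQ fP] \<alpha>_def mu_sym by simp
  have k5: "5 * \<alpha> \<le> k" using k \<alpha>_def by simp
  let ?\<Phi> = "Phi P Q \<alpha> k"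
  have PhiD: "x \<in> DD P \<and> (f^^k) x \<in> DD Q" if "?\<Phi> x" for x
  proof -
    have "0 + \<alpha> \<le> k" using k5 by simp
    then have "(f^^0) x \<in> DD P" using that unfolding Phi_def by blast
    moreover have "(f^^k) x \<in> DD Q" using that k5 unfolding Phi_def by auto
    ultimately show ?thesis by simp
  qed
  have rq: "rmap Q P k (qmap (snd P) x) = (if ?\<Phi> x then {(f^^k) x} else snd Q)" if "x \<in> fst P" for x
  proof (cases "x \<in> snd P")
    case True
    then have "\<not> ?\<Phi> x" using PhiD unfolding DD_def by blast
    then show ?thesis using True by (simp add: qmap_in_L rmap_L)
  next
    case False
    then have "x \<in> DD P" using that unfolding DD_def by blast
    then show ?thesis using False by (simp add: qmap_notin rmap_single \<alpha>_def)
  qed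
  have oWP: "open (interior (fst P) - snd P)" and oWQ: "open (interior (fst Q) - snd Q)"
    using FP(16) FQ(16) by (auto intro: open_Diff)
  have oLP: "open (- snd P)" using FP(16) by (simp add: open_Compl)
  have openpart: "openin (top_of_set (fst P)) {x \<in> fst P. ?\<Phi> x \<and> (f^^k) x \<in> Ov}"
    if Ov: "openin (top_of_set (fst Q)) Ov" for Ov
  proof -
    obtain Ow where Ow: "open Ow" "Ov = fst Q \<inter> Ow" using Ov openin_open by blast
    define G where "G i = (if i = 0 then - snd P else if i + \<alpha> \<le> k then interior (fst P) - snd P else UNIV)
       \<inter> (if \<alpha> \<le> i then interior (fst Q) - snd Q else UNIV) \<inter> (if i = k then Ow else UNIV)" for i
    have oG: "open (G i)" for i unfolding G_def using oWP oWQ oLP Ow(1) by (auto intro!: open_Int)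
    have eq: "{x \<in> fst P. ?\<Phi> x \<and> (f^^k) x \<in> Ov} = fst P \<inter> {x. \<forall>i\<le>k. (f^^i) x \<in> U \<inter> G i}"
    proof (intro equalityI subsetI)
      fix x assume "x \<in> {x \<in> fst P. ?\<Phi> x \<and> (f^^k) x \<in> Ov}"
      then have xP: "x \<in> fst P" and ph: "?\<Phi> x" and fk: "(f^^k) x \<in> Ov" by auto
      have A: "\<And>i. i + \<alpha> \<le> k \<Longrightarrow> (f^^i) x \<in> DD P" and B: "\<And>i. \<alpha> \<le> i \<Longrightarrow> i \<le> k \<Longrightarrow> (f^^i) x \<in> DD Q"
        using ph unfolding Phi_def by auto
      have "(f^^i) x \<in> U \<inter> G i" if i: "i \<le> k" for i
      proof -
        have "(f^^i) x \<in> U"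
        proof (cases "i + \<alpha> \<le> k")
          case True then show ?thesis using A FP(4) unfolding DD_def by blast
        next
          case False then have "\<alpha> \<le> i" using k5 by simp
          then show ?thesis using B[of i] i FQ(4) unfolding DD_def by auto
        qed
        moreover have "(f^^i) x \<in> (if i = 0 then - snd P else if i + \<alpha> \<le> k then interior (fst P) - snd P else UNIV)"
        proof (cases "i = 0")
          case True then show ?thesis using A[of 0] k5 unfolding DD_def by auto
        next
          case False
          show ?thesis
          proof (cases "i + \<alpha> \<le> k")
            case True
            have "(f^^(i-1)) x \<in> DD P" using A True by simp
            then have "(f^^i) x \<in> interior (fst P)" using FP(10) funpow_pred False by auto
            then show ?thesis using A[OF True] False True unfolding DD_def by auto
          qed (use False in auto)
        qed
        moreover have "(f^^i) x \<in> (if \<alpha> \<le> i then interior (fst Q) - snd Q else UNIV)"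
        proof (cases "\<alpha> \<le> i")
          case True
          show ?thesis
          proof (cases "i = \<alpha>")
            case True
            have seg: "\<forall>j. 0 \<le> j \<and> j \<le> k - \<alpha> \<longrightarrow> (f^^j) x \<in> AA P" using A FP(13) k5 by (auto simp: le_diff_conv2)
            have "(f^^\<alpha>) x \<in> WW Q" by (rule loc[OF RPQ seg]) (use k5 in auto)
            then show ?thesis using True unfolding WW_def by auto
          next
            case False
            then have "(f^^(i-1)) x \<in> DD Q" using B \<open>\<alpha> \<le> i\<close> i by simp
            then have "(f^^i) x \<in> interior (fst Q)" using FQ(10) funpow_pred False \<open>\<alpha> \<le> i\<close> by auto
            then show ?thesis using B[OF \<open>\<alpha> \<le> i\<close> i] unfolding DD_def by auto
          qed
        qed simp
        moreover have "(f^^i) x \<in> (if i = k then Ow else UNIV)" using fk Ow by auto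
        ultimately show ?thesis unfolding G_def by blast
      qed
      then show "x \<in> fst P \<inter> {x. \<forall>i\<le>k. (f^^i) x \<in> U \<inter> G i}" using xP by blast
    next
      fix x assume "x \<in> fst P \<inter> {x. \<forall>i\<le>k. (f^^i) x \<in> U \<inter> G i}"
      then have xP: "x \<in> fst P" and H: "\<And>i. i \<le> k \<Longrightarrow> (f^^i) x \<in> G i" by auto
      have "(f^^i) x \<in> DD P" if "i + \<alpha> \<le> k" for i
      proof (cases "i = 0")
        case True then show ?thesis using H[of 0] xP unfolding G_def DD_def by auto
      next
        case False then show ?thesis using H[of i] that interior_subset unfolding G_def DD_def by auto
      qed
      moreover have "(f^^i) x \<in> DD Q" if "\<alpha> \<le> i" "i \<le> k" for i
        using H[of i] that interior_subset unfolding G_def DD_def by auto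
      moreover have "(f^^k) x \<in> Ov"
        using H[of k] calculation(2)[of k] k5 Ow(2) unfolding G_def DD_def by auto
      ultimately show "x \<in> {x \<in> fst P. ?\<Phi> x \<and> (f^^k) x \<in> Ov}" using xP unfolding Phi_def by auto
    qed
    show ?thesis unfolding eq by (rule openin_open_Int[OF open_orbit_set]) (use oG in auto)
  qed
  have closedpart: "closed {x \<in> fst P. ?\<Phi> x \<and> (f^^k) x \<notin> Ov}"
    if Ov: "openin (top_of_set (fst Q)) Ov" and LO: "snd Q \<subseteq> Ov" for Ov
  proof -
    obtain Ow where Ow: "open Ow" "Ov = fst Q \<inter> Ow" using Ov openin_open by blast
    define C where "C i = (if i + \<alpha> \<le> k then AA P else UNIV) \<inter> (if \<alpha> \<le> i then AA Q else UNIV)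
       \<inter> (if i = k then fst Q - Ow else UNIV)" for i
    have cC: "closed (C i) \<and> C i \<subseteq> U" if "i \<le> k" for i
    proof
      show "closed (C i)" unfolding C_def using FP(17) FQ(17) FQ(15) Ow(1) by (auto intro!: closed_Int closed_Diff)
      show "C i \<subseteq> U"
      proof (cases "i + \<alpha> \<le> k")
        case True then show ?thesis unfolding C_def using FP(7) by auto
      next
        case False then show ?thesis unfolding C_def using FQ(7) that k5 by auto
      qed
    qed
    have eq: "{x \<in> fst P. ?\<Phi> x \<and> (f^^k) x \<notin> Ov} = {x. \<forall>i\<le>k. (f^^i) x \<in> C i}"
    proof (intro equalityI subsetI)
      fix x assume "x \<in> {x \<in> fst P. ?\<Phi> x \<and> (f^^k) x \<notin> Ov}"
      then have ph: "?\<Phi> x" and fk: "(f^^k) x \<notin> Ov" by auto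
      have A: "\<And>i. i + \<alpha> \<le> k \<Longrightarrow> (f^^i) x \<in> DD P" and B: "\<And>i. \<alpha> \<le> i \<Longrightarrow> i \<le> k \<Longrightarrow> (f^^i) x \<in> DD Q"
        using ph unfolding Phi_def by auto
      have "(f^^k) x \<in> fst Q" using B[of k] k5 unfolding DD_def by auto
      then have "(f^^k) x \<notin> Ow" using fk Ow(2) by auto
      then show "x \<in> {x. \<forall>i\<le>k. (f^^i) x \<in> C i}"
        using A B FP(13) FQ(13) \<open>(f^^k) x \<in> fst Q\<close> unfolding C_def by auto
    next
      fix x assume "x \<in> {x. \<forall>i\<le>k. (f^^i) x \<in> C i}"
      then have H: "\<And>i. i \<le> k \<Longrightarrow> (f^^i) x \<in> C i" by auto
      have HA: "(f^^i) x \<in> AA P" if "i + \<alpha> \<le> k" for i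
      proof -
        have "i \<le> k" using that by simp
        then show ?thesis using H[of i] that unfolding C_def by simp
      qed
      have HB: "(f^^i) x \<in> AA Q" if "\<alpha> \<le> i" "i \<le> k" for i
        using H[of i] that unfolding C_def by simp
      have HK: "(f^^k) x \<notin> Ow" using H[of k] unfolding C_def by auto
      have segB: "\<forall>j. \<alpha> \<le> j \<and> j \<le> k \<longrightarrow> (f^^j) x \<in> AA Q" using HB by auto
      have DP: "(f^^i) x \<in> DD P" if i: "i + \<alpha> \<le> k" for i
      proof -
        have inP: "(f^^i) x \<in> fst P" using HA[OF i] FP(5) by blast
        have "(f^^i) x \<notin> snd P"
        proof (cases "i + \<alpha> < k")
          case True
          then have "Suc i + \<alpha> \<le> k" by simp
          then have "(f^^Suc i) x \<in> AA P" by (rule HA)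
          then have "f ((f^^i) x) \<in> AA P" by simp
          then show ?thesis using FP(11) by blast
        next
          case False
          then have "i + \<alpha> = k" using i by simp
          then have "(f^^i) x \<in> WW P" by (intro loc[OF RQP segB]) (use k5 in auto)
          then show ?thesis unfolding WW_def by blast
        qed
        then show ?thesis using inP unfolding DD_def by blast
      qed
      have DQ: "(f^^i) x \<in> DD Q" if i: "\<alpha> \<le> i" "i \<le> k" for i
      proof -
        have inQ: "(f^^i) x \<in> fst Q" using HB[OF i] FQ(5) by blast
        have "(f^^i) x \<notin> snd Q"
        proof (cases "i < k")
          case True
          then have "(f^^Suc i) x \<in> AA Q" using HB i by (simp del: funpow.simps)
          then have "f ((f^^i) x) \<in> AA Q" by simp
          then show ?thesis using FQ(11) by blast
        next
          case False
          then have "i = k" using i by simp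
          then show ?thesis using HK LO Ow(2) by auto
        qed
        then show ?thesis using inQ unfolding DD_def by blast
      qed
      have "x \<in> fst P" using DP[of 0] k5 unfolding DD_def by auto
      moreover have "(f^^k) x \<notin> Ov" using HK Ow(2) by auto
      ultimately show "x \<in> {x \<in> fst P. ?\<Phi> x \<and> (f^^k) x \<notin> Ov}" using DP DQ unfolding Phi_def by auto
    qed
    show ?thesis unfolding eq by (rule closed_orbit_set) (use cC in auto)
  qed
  show ?thesis
  proof (rule cont_NL)
    fix y assume y: "y \<in> NL_space (fst P) (snd P)"
    then consider "y = snd P" | x where "x \<in> fst P" "y = qmap (snd P) x" unfolding NL_space_def by auto
    then show "rmap Q P k y \<in> NL_space (fst Q) (snd Q)"
    proof cases
      case 1 then show ?thesis by (simp add: rmap_L NL_space_def)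
    next
      case (2 x)
      show ?thesis
      proof (cases "?\<Phi> x")
        case True
        then have "(f^^k) x \<in> DD Q" using PhiD by blast
        then have "{(f^^k) x} = qmap (snd Q) ((f^^k) x)" "(f^^k) x \<in> fst Q" unfolding DD_def by (auto simp: qmap_notin)
        then show ?thesis using 2 True rq by (simp add: qmap_in)
      next
        case False then show ?thesis using 2 rq by (simp add: NL_space_def)
      qed
    qed
  next
    fix V assume V: "V \<subseteq> NL_space (fst Q) (snd Q)" and Vo: "openin (top_of_set (fst Q)) {z \<in> fst Q. qmap (snd Q) z \<in> V}"
    define Ov where "Ov = {z \<in> fst Q. qmap (snd Q) z \<in> V}"
    have key: "{(f^^k) x} \<in> V \<longleftrightarrow> (f^^k) x \<in> Ov" if "?\<Phi> x" for x
    proof -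
      have "(f^^k) x \<in> DD Q" using PhiD that by blast
      then show ?thesis unfolding Ov_def DD_def by (auto simp: qmap_notin)
    qed
    show "openin (top_of_set (fst P)) {x \<in> fst P. rmap Q P k (qmap (snd P) x) \<in> V}"
    proof (cases "snd Q \<in> V")
      case True
      have LO: "snd Q \<subseteq> Ov" unfolding Ov_def using True FQ(3) by (auto simp: qmap_in_L)
      have pw: "rmap Q P k (qmap (snd P) x) \<in> V \<longleftrightarrow> \<not> (?\<Phi> x \<and> (f^^k) x \<notin> Ov)" if "x \<in> fst P" for x
      proof (cases "?\<Phi> x")
        case True then show ?thesis using rq[OF that] key[OF True] by simp
      next
        case False then show ?thesis using rq[OF that] \<open>snd Q \<in> V\<close> by simp
      qed
      have eqs: "{x \<in> fst P. rmap Q P k (qmap (snd P) x) \<in> V} = fst P - {x \<in> fst P. ?\<Phi> x \<and> (f^^k) x \<notin> Ov}"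
        using pw by auto
      have cl: "closedin (top_of_set (fst P)) {x \<in> fst P. ?\<Phi> x \<and> (f^^k) x \<notin> Ov}"
        using closedpart[OF Vo[folded Ov_def] LO] by (intro closed_subset) auto
      show ?thesis unfolding eqs by (rule openin_diff[OF openin_subtopology_self cl])
    next
      case False
      have pw: "rmap Q P k (qmap (snd P) x) \<in> V \<longleftrightarrow> ?\<Phi> x \<and> (f^^k) x \<in> Ov" if "x \<in> fst P" for x
      proof (cases "?\<Phi> x")
        case True then show ?thesis using rq[OF that] key[OF True] by simp
      next
        case False then show ?thesis using rq[OF that] \<open>snd Q \<notin> V\<close> by simp
      qed
      have "{x \<in> fst P. rmap Q P k (qmap (snd P) x) \<in> V} = {x \<in> fst P. ?\<Phi> x \<and> (f^^k) x \<in> Ov}"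
        using pw by auto
      then show ?thesis using openpart[OF Vo[folded Ov_def]] by simp
    qed
  qed
qed

end

context dynsys
begin

lemma locD:
  assumes "RR X Y a" "filtration_pair U f S X" "filtration_pair U f S Y"
    "\<forall>i. s \<le> i \<and> i \<le> e \<longrightarrow> (f^^i) x \<in> DD X" "s + a \<le> t" "t + a \<le> e"
  shows "(f^^t) x \<in> DD Y"
proof -
  have "\<forall>i. s \<le> i \<and> i \<le> e \<longrightarrow> (f^^i) x \<in> AA X" using assms(4) fp_facts(13)[OF assms(2)] by blast
  then have "(f^^t) x \<in> WW Y" using loc[OF assms(1) _ assms(5,6)] by blast
  then show ?thesis using fp_facts(14)[OF assms(3)] by blast
qed

lemma rmap_self:
  assumes fp: "filtration_pair U f S P" and k: "5 * mu P P \<le> k" and y: "y \<in> NL_space (fst P) (snd P)"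
  shows "rmap P P k y = (fP f (snd P) ^^ k) y"
proof -
  consider "y = snd P" | x where "x \<in> DD P" "y = {x}"
    using y unfolding NL_space_def DD_def qmap_def by auto
  then show ?thesis
  proof cases
    case 1 then show ?thesis by (simp add: rmap_L fP_L)
  next
    case (2 x)
    have "Phi P P (mu P P) k x \<longleftrightarrow> (\<forall>i\<le>k. (f^^i) x \<in> DD P)"
    proof
      assume "Phi P P (mu P P) k x"
      then have A: "\<And>i. i + mu P P \<le> k \<Longrightarrow> (f^^i) x \<in> DD P" and B: "\<And>i. mu P P \<le> i \<Longrightarrow> i \<le> k \<Longrightarrow> (f^^i) x \<in> DD P"
        unfolding Phi_def by auto
      show "\<forall>i\<le>k. (f^^i) x \<in> DD P"
      proof (intro allI impI)
        fix i assume i: "i \<le> k"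
        show "(f^^i) x \<in> DD P"
        proof (cases "i + mu P P \<le> k")
          case True then show ?thesis by (rule A)
        next
          case False then have "mu P P \<le> i" using k by simp
          then show ?thesis using B i by blast
        qed
      qed
    next
      assume "\<forall>i\<le>k. (f^^i) x \<in> DD P"
      then show "Phi P P (mu P P) k x" unfolding Phi_def by auto
    qed
    then show ?thesis using 2 fP_pow[OF fp 2(1)] rmap_single[OF 2(1)] by simp
  qed
qed

lemma phi_comp:
  assumes f1: "filtration_pair U f S P" and f2: "filtration_pair U f S P'" and f3: "filtration_pair U f S P''"
    and k1: "5 * mu P' P'' \<le> k1" and k2: "5 * mu P P' \<le> k2"
  shows "Phi P P'' (mu P P'') (k1 + k2) x \<longleftrightarrow> Phi P P' (mu P P') k2 x \<and> Phi P' P'' (mu P' P'') k1 ((f^^k2) x)"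
proof -
  define p where "p i \<longleftrightarrow> (f^^i) x \<in> DD P" for i
  define q where "q i \<longleftrightarrow> (f^^i) x \<in> DD P'" for i
  define r where "r i \<longleftrightarrow> (f^^i) x \<in> DD P''" for i
  have rr: "RR X Y (mu X Y) \<and> RR Y X (mu X Y)" if "filtration_pair U f S X" "filtration_pair U f S Y" for X Y
  proof -
    have "RR Y X (mu Y X)" by (rule RR_mu[OF that(2,1) order_refl])
    then show ?thesis using RR_mu[OF that order_refl] mu_sym[of X Y] by simp
  qed
  have eq: "?thesis \<longleftrightarrow> (((\<forall>i. i + mu P P'' \<le> k1 + k2 \<longrightarrow> p i) \<and> (\<forall>i. mu P P'' \<le> i \<and> i \<le> k1 + k2 \<longrightarrow> r i)) \<longleftrightarrow>
    ((\<forall>i. i + mu P P' \<le> k2 \<longrightarrow> p i) \<and> (\<forall>i. mu P P' \<le> i \<and> i \<le> k2 \<longrightarrow> q i) \<and>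
     (\<forall>i. i + mu P' P'' \<le> k1 \<longrightarrow> q (i + k2)) \<and> (\<forall>i. mu P' P'' \<le> i \<and> i \<le> k1 \<longrightarrow> r (i + k2))))"
    unfolding Phi_def p_def q_def r_def funpow_apply_add by blast
  show ?thesis unfolding eq
  proof (rule comp_arith)
    show "mu P P'' \<le> mu P P' + mu P' P''" by (rule mu_tri[OF f1 f2 f3])
    show "5 * mu P' P'' \<le> k1" "5 * mu P P' \<le> k2" using k1 k2 .
    fix s e t
    show "\<forall>i. s \<le> i \<and> i \<le> e \<longrightarrow> p i \<Longrightarrow> s + mu P P' \<le> t \<Longrightarrow> t + mu P P' \<le> e \<Longrightarrow> q t"
      unfolding p_def q_def using rr[OF f1 f2] by (intro locD[OF _ f1 f2]) auto
    show "\<forall>i. s \<le> i \<and> i \<le> e \<longrightarrow> q i \<Longrightarrow> s + mu P P' \<le> t \<Longrightarrow> t + mu P P' \<le> e \<Longrightarrow> p t"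
      unfolding p_def q_def using rr[OF f1 f2] by (intro locD[OF _ f2 f1]) auto
    show "\<forall>i. s \<le> i \<and> i \<le> e \<longrightarrow> q i \<Longrightarrow> s + mu P' P'' \<le> t \<Longrightarrow> t + mu P' P'' \<le> e \<Longrightarrow> r t"
      unfolding r_def q_def using rr[OF f2 f3] by (intro locD[OF _ f2 f3]) auto
    show "\<forall>i. s \<le> i \<and> i \<le> e \<longrightarrow> r i \<Longrightarrow> s + mu P' P'' \<le> t \<Longrightarrow> t + mu P' P'' \<le> e \<Longrightarrow> q t"
      unfolding r_def q_def using rr[OF f2 f3] by (intro locD[OF _ f3 f2]) auto
    show "\<forall>i. s \<le> i \<and> i \<le> e \<longrightarrow> p i \<Longrightarrow> s + mu P P'' \<le> t \<Longrightarrow> t + mu P P'' \<le> e \<Longrightarrow> r t"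
      unfolding r_def p_def using rr[OF f1 f3] by (intro locD[OF _ f1 f3]) auto
    show "\<forall>i. s \<le> i \<and> i \<le> e \<longrightarrow> r i \<Longrightarrow> s + mu P P'' \<le> t \<Longrightarrow> t + mu P P'' \<le> e \<Longrightarrow> p t"
      unfolding r_def p_def using rr[OF f1 f3] by (intro locD[OF _ f3 f1]) auto
  qed
qed

lemma rmap_comp:
  assumes f1: "filtration_pair U f S P" and f2: "filtration_pair U f S P'" and f3: "filtration_pair U f S P''"
    and k1: "5 * mu P' P'' \<le> k1" and k2: "5 * mu P P' \<le> k2" and y: "y \<in> NL_space (fst P) (snd P)"
  shows "rmap P'' P (k1 + k2) y = rmap P'' P' k1 (rmap P' P k2 y)"
proof -
  consider "y = snd P" | x where "x \<in> DD P" "y = {x}"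
    using y unfolding NL_space_def DD_def qmap_def by auto
  then show ?thesis
  proof cases
    case 1 then show ?thesis by (simp add: rmap_L)
  next
    case (2 x)
    note pc = phi_comp[OF f1 f2 f3 k1 k2, of x]
    show ?thesis
    proof (cases "Phi P P' (mu P P') k2 x")
      case True
      have "mu P P' \<le> k2" using k2 by simp
      then have z: "(f^^k2) x \<in> DD P'" using True unfolding Phi_def by blast
      have "rmap P' P k2 y = {(f^^k2) x}" using 2 True rmap_single by simp
      moreover have "(f^^k1) ((f^^k2) x) = (f^^(k1+k2)) x" by (rule funpow_apply_add)
      ultimately show ?thesis using 2 pc True rmap_single[OF z] rmap_single[OF 2(1)] by simp
    next
      case False
      have "rmap P' P k2 y = snd P'" using 2 False rmap_single by simp
      then show ?thesis using 2 pc False rmap_single[OF 2(1)] rmap_L by simp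
    qed
  qed
qed

end

theorem mainTheorem6:
  fixes U :: "'a::metric_space set" and f :: "'a \<Rightarrow> 'a" and S :: "'a set"
  assumes "locally compact (UNIV :: 'a set)"
    and "open U"
    and "continuous_on U f"
    and "isolated_invariant_set U f S"
  shows "\<exists>(M :: 'a set \<times> 'a set \<Rightarrow> 'a set \<times> 'a set \<Rightarrow> nat)
          (r :: 'a set \<times> 'a set \<Rightarrow> 'a set \<times> 'a set \<Rightarrow> nat \<Rightarrow> 'a set \<Rightarrow> 'a set).
     (\<forall>N L N' L'. filtration_pair U f S (N, L) \<and> filtration_pair U f S (N', L') \<longrightarrow>
        (\<forall>k \<ge> M (N, L) (N', L').
           continuous_map (NL_top N L) (NL_top N' L') (r (N', L') (N, L) k) \<and>
           r (N', L') (N, L) k L = L') \<and>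
        M (N, L) (N', L') = M (N', L') (N, L)) \<and>
     (\<forall>N L. filtration_pair U f S (N, L) \<longrightarrow>
        (\<forall>k \<ge> M (N, L) (N, L). \<forall>y \<in> NL_space N L.
           r (N, L) (N, L) k y = (fP f L ^^ k) y)) \<and>
     (\<forall>P P' P''. filtration_pair U f S P \<and> filtration_pair U f S P' \<and>
         filtration_pair U f S P'' \<longrightarrow>
        M P P'' \<le> M P P' + M P' P'' \<and>
        (\<forall>k1 k2. k1 \<ge> M P' P'' \<and> k2 \<ge> M P P' \<longrightarrow>
           (\<forall>y \<in> NL_space (fst P) (snd P).
              r P'' P (k1 + k2) y = r P'' P' k1 (r P' P k2 y))))"
proof -
  interpret dynsys U f by unfold_locales (use assms(2,3) in auto)
  show ?thesis
  proof (intro exI[of _ "\<lambda>P Q. 5 * mu P Q"] exI[of _ rmap] conjI allI impI ballI)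
    fix N L N' L' k
    assume fp: "filtration_pair U f S (N, L) \<and> filtration_pair U f S (N', L')"
      and k: "5 * mu (N, L) (N', L') \<le> k"
    show "continuous_map (NL_top N L) (NL_top N' L') (rmap (N', L') (N, L) k)"
      using rmap_cont[of S "(N, L)" "(N', L')" k] fp k by simp
    show "rmap (N', L') (N, L) k L = L'" using rmap_L[of "(N', L')" "(N, L)" k] by simp
  next
    fix N L N' L'
    show "5 * mu (N, L) (N', L') = 5 * mu (N', L') (N, L)" using mu_sym by simp
  next
    fix N L k y
    assume fp: "filtration_pair U f S (N, L)" and k: "5 * mu (N, L) (N, L) \<le> k" and y: "y \<in> NL_space N L"
    show "rmap (N, L) (N, L) k y = (fP f L ^^ k) y"
      using rmap_self[of S "(N, L)" k y] fp k y by simp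
  next
    fix P P' P''
    assume fp: "filtration_pair U f S P \<and> filtration_pair U f S P' \<and> filtration_pair U f S P''"
    show "5 * mu P P'' \<le> 5 * mu P P' + 5 * mu P' P''" using mu_tri[of S P P' P''] fp by simp
  next
    fix P P' P'' k1 k2 y
    assume fp: "filtration_pair U f S P \<and> filtration_pair U f S P' \<and> filtration_pair U f S P''"
      and k: "5 * mu P' P'' \<le> k1 \<and> 5 * mu P P' \<le> k2" and y: "y \<in> NL_space (fst P) (snd P)"
    show "rmap P'' P (k1 + k2) y = rmap P'' P' k1 (rmap P' P k2 y)"
      using rmap_comp[of S P P' P'' k1 k2 y] fp k y by simp
  qed
qed

end
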